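(* Let $P,P'\subset\mathbb R^2$ be two open bounded convex polygons and $Q$ the convex hull of $P\cup P'$. If $x_c$ is a vertex of $P$ such that $d(x_c,P')=d_H(P,P')$, then $x_c$ is a vertex of $Q$. If the angle of $P$ at $x_c$ is $\alpha$, then the angle of $Q$ at $x_c$ is at most $(\alpha+\pi)/2<\pi$.
   Context: $d_H(P,P')=\max(\sup_{x\in P}d(x,P'),\sup_{x'\in P'}d(x',P))$ is the Hausdorff distance. *)

theory Defs
  imports "HOL-Analysis.Analysis"
begin

definition open_convex_polygon :: "(real^2) set \<Rightarrow> bool" where
  "open_convex_polygon P \<longleftrightarrow>
     (\<exists>V. finite V \<and> P = interior (convex hull V) \<and> P \<noteq> {})"

definition polygon_vertex :: "real^2 \<Rightarrow> (real^2) set \<Rightarrow> bool" where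
  "polygon_vertex x P \<longleftrightarrow> x extreme_point_of (closure P)"

definition hausdorff_dist :: "(real^2) set \<Rightarrow> (real^2) set \<Rightarrow> real" where
  "hausdorff_dist P P' = max (SUP x\<in>P. infdist x P') (SUP x'\<in>P'. infdist x' P)"

definition vec_angle :: "real^2 \<Rightarrow> real^2 \<Rightarrow> real" where
  "vec_angle u v = arccos (inner u v / (norm u * norm v))"

definition polygon_angle :: "(real^2) set \<Rightarrow> real^2 \<Rightarrow> real" where
  "polygon_angle P x = (SUP p\<in>(P \<times> P). vec_angle (fst p - x) (snd p - x))"

end

theory Submission
  imports Defs
begin


lemma inner2: "inner (a::real^2) b = a$1*b$1 + a$2*b$2"
  by (simp add: inner_vec_def sum_2)
lemma norm2: "norm (a::real^2) = sqrt (a$1^2 + a$2^2)"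
  by (simp add: norm_vec_def L2_set_def sum_2)

definition rot :: "real^2 \<Rightarrow> real^2" where "rot m = vector [-(m$2), m$1]"

definition ph :: "real^2 \<Rightarrow> real^2 \<Rightarrow> real^2 \<Rightarrow> real" where
  "ph m k v = arctan (inner v k / inner v m)"

definition okb :: "real^2 \<Rightarrow> real^2 \<Rightarrow> bool" where
  "okb m k \<longleftrightarrow> norm m = 1 \<and> (k = rot m \<or> k = - rot m)"

lemma okb_sq: fixes m :: "real^2" assumes "norm m = 1" shows "m$1^2 + m$2^2 = 1"
proof -
  have "sqrt (m$1^2 + m$2^2) = 1" using assms by (simp add: norm2)
  then show ?thesis by (metis real_sqrt_eq_1_iff)
qed

lemma okb_inner: assumes "okb m k"
  shows "inner a m * inner b m + inner a k * inner b k = inner a b"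
proof -
  have s: "m$1^2 + m$2^2 = 1" using assms okb_sq okb_def by blast
  have "inner a m * inner b m + inner a k * inner b k
      = (a$1*b$1 + a$2*b$2) * (m$1^2 + m$2^2)"
    using assms unfolding okb_def
    by (auto simp: inner2 rot_def vector_2 algebra_simps power2_eq_square)
  then show ?thesis using s by (simp add: inner2)
qed

lemma okb_norm: assumes "okb m k"
  shows "inner a m ^2 + inner a k ^2 = norm a ^2"
  using okb_inner[OF assms, of a a] by (simp add: power2_eq_square flip: power2_norm_eq_inner)

lemma okb_neg: "okb m k \<Longrightarrow> okb m (-k)"
  by (auto simp: okb_def)

lemma ph_neg: "ph m (-k) v = - ph m k v"
  by (simp add: ph_def arctan_minus)

lemma ph_bounds: "-(pi/2) < ph m k v" "ph m k v < pi/2"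
  using arctan_bounded unfolding ph_def by auto

lemma polar:
  assumes "okb m k" "inner v m > 0"
  shows "inner v m = norm v * cos (ph m k v)" "inner v k = norm v * sin (ph m k v)"
proof -
  define t where "t = inner v k / inner v m"
  have ik: "inner v k = t * inner v m" using assms(2) by (simp add: t_def)
  have "norm v ^2 = inner v m ^2 * (1 + t^2)"
    using okb_norm[OF assms(1), of v] ik by (simp add: algebra_simps power2_eq_square)
  then have nv: "norm v = inner v m * sqrt (1 + t^2)"
    using assms(2) by (metis norm_ge_zero real_sqrt_mult real_sqrt_abs real_sqrt_unique abs_of_pos)
  have pos: "sqrt (1 + t^2) > 0" by (simp add: add_pos_nonneg)
  show "inner v m = norm v * cos (ph m k v)"
    using pos by (simp add: nv ph_def cos_arctan t_def[symmetric])
  show "inner v k = norm v * sin (ph m k v)"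
    using pos by (simp add: nv ph_def sin_arctan t_def[symmetric] ik)
qed

lemma inner_cos:
  assumes "okb m k" "inner a m > 0" "inner b m > 0"
  shows "inner a b = norm a * norm b * cos (ph m k a - ph m k b)"
  using okb_inner[OF assms(1), of a b] polar[OF assms(1) assms(2)] polar[OF assms(1) assms(3)]
  by (simp add: cos_diff algebra_simps)


lemma vangle_ph:
  assumes "okb m k" "inner a m > 0" "inner b m > 0"
  shows "vec_angle a b = \<bar>ph m k a - ph m k b\<bar>"
proof -
  have na: "norm a > 0" using assms(2) by (metis inner_zero_left zero_less_norm_iff order_less_irrefl)
  have nb: "norm b > 0" using assms(3) by (metis inner_zero_left zero_less_norm_iff order_less_irrefl)
  have "inner a b / (norm a * norm b) = cos (ph m k a - ph m k b)"
    using inner_cos[OF assms] na nb by simp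
  moreover have "\<bar>ph m k a - ph m k b\<bar> \<le> pi"
    using ph_bounds[of m k a] ph_bounds[of m k b] by linarith
  ultimately show ?thesis unfolding vec_angle_def by (simp add: arccos_cos_eq_abs)
qed

lemma mediant:
  assumes "inner a m > 0" "inner b m > 0" "s \<ge> 0" "t \<ge> 0" "s + t > 0"
  shows "min (ph m k a) (ph m k b) \<le> ph m k (s *\<^sub>R a + t *\<^sub>R b)
       \<and> ph m k (s *\<^sub>R a + t *\<^sub>R b) \<le> max (ph m k a) (ph m k b)"
proof -
  define ra where "ra = inner a k / inner a m"
  define rb where "rb = inner b k / inner b m"
  have ea: "inner a k = ra * inner a m" using assms(1) by (simp add: ra_def)
  have eb: "inner b k = rb * inner b m" using assms(2) by (simp add: rb_def)
  have den: "s * inner a m + t * inner b m > 0"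
  proof -
    have "s * inner a m \<ge> 0" "t * inner b m \<ge> 0" using assms by auto
    moreover have "s * inner a m > 0 \<or> t * inner b m > 0"
    proof (cases "s > 0")
      case True then show ?thesis using assms by auto
    next
      case False then have "t > 0" using assms by auto
      then show ?thesis using assms by auto
    qed
    ultimately show ?thesis by linarith
  qed
  define r where "r = (s * inner a k + t * inner b k) / (s * inner a m + t * inner b m)"
  have hr: "ph m k (s *\<^sub>R a + t *\<^sub>R b) = arctan r"
    by (simp add: ph_def r_def inner_add_left)
  have num: "s * inner a k + t * inner b k = s * inner a m * ra + t * inner b m * rb"
    using ea eb by (simp add: algebra_simps)
  have up: "s * inner a m * ra + t * inner b m * rb \<le> (s * inner a m + t * inner b m) * max ra rb"
  proof -
    have "s * inner a m * ra \<le> s * inner a m * max ra rb" using assms by (intro mult_left_mono) auto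
    moreover have "t * inner b m * rb \<le> t * inner b m * max ra rb" using assms by (intro mult_left_mono) auto
    ultimately show ?thesis by (simp add: algebra_simps)
  qed
  have lo: "(s * inner a m + t * inner b m) * min ra rb \<le> s * inner a m * ra + t * inner b m * rb"
  proof -
    have "s * inner a m * min ra rb \<le> s * inner a m * ra" using assms by (intro mult_left_mono) auto
    moreover have "t * inner b m * min ra rb \<le> t * inner b m * rb" using assms by (intro mult_left_mono) auto
    ultimately show ?thesis by (simp add: algebra_simps)
  qed
  have "r \<le> max ra rb" using up den num by (simp add: r_def pos_divide_le_eq mult.commute)
  moreover have "min ra rb \<le> r" using lo den num by (simp add: r_def pos_le_divide_eq mult.commute)
  ultimately show ?thesis unfolding hr unfolding ph_def ra_def[symmetric] rb_def[symmetric]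
    by (auto simp: arctan_le_iff min_def max_def)
qed

lemma dist_lower:
  assumes "okb m k" "inner Y m > 0" "inner C m > 0" "ph m k Y - ph m k C > 0"
  shows "norm (Y - C) \<ge> norm Y * sin (min (ph m k Y - ph m k C) (pi/2))"
proof -
  define D where "D = ph m k Y - ph m k C"
  have Dpi: "D < pi" using ph_bounds[of m k Y] ph_bounds[of m k C] unfolding D_def by linarith
  have e: "norm (Y - C)^2 = norm Y ^2 + norm C ^2 - 2 * (norm Y * norm C * cos D)"
    using inner_cos[OF assms(1-3)] unfolding D_def
    by (simp add: power2_norm_eq_inner inner_diff_left inner_diff_right inner_commute)
  show ?thesis
  proof (cases "D \<ge> pi/2")
    case True
    have "cos (pi - D) \<ge> 0" using True Dpi by (intro cos_ge_zero) auto
    then have "cos D \<le> 0" by simp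
    then have "norm Y * norm C * cos D \<le> 0"
      by (simp add: mult_nonneg_nonpos)
    moreover have "norm C ^2 \<ge> 0" by simp
    ultimately have "norm Y ^2 \<le> norm (Y - C)^2" using e by linarith
    then have "norm Y \<le> norm (Y - C)" by (rule power2_le_imp_le) simp
    then show ?thesis using True unfolding D_def[symmetric] by simp
  next
    case False
    have s0: "sin D \<ge> 0" using Dpi assms(4) unfolding D_def[symmetric] by (intro sin_ge_zero) auto
    have "norm (Y - C)^2 - (norm Y * sin D)^2 = (norm C - norm Y * cos D)^2"
    proof -
      have h: "(norm Y)^2 = (norm Y * sin D)^2 + (norm Y * cos D)^2"
        by (metis sin_cos_squared_add power_mult_distrib distrib_left mult_1_right)
      show ?thesis using e h by algebra
    qed
    then have "(norm Y * sin D)^2 \<le> norm (Y - C)^2" by (metis diff_ge_0_iff_ge zero_le_power2)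
    then have "norm Y * sin D \<le> norm (Y - C)" by (rule power2_le_imp_le) simp
    then show ?thesis using False unfolding D_def[symmetric] by simp
  qed
qed


lemma core:
  assumes ok: "okb m k" and d: "d > 0"
    and Ppos: "\<forall>c\<in>P. inner (c - x) m > 0" and Pne: "P \<noteq> {}"
    and ym: "inner (y - x) m \<ge> d" and yd: "infdist y P \<le> d"
    and eta: "\<eta> > 0"
    and h: "\<forall>c\<in>P. ph m k (c - x) \<le> 2 * ph m k (y - x) - pi/2 - \<eta>"
  shows False
proof -
  define Y where "Y = y - x"
  define fy where "fy = ph m k Y"
  have Ym: "inner Y m > 0" using ym d unfolding Y_def by linarith
  obtain c0 where c0: "c0 \<in> P" using Pne by auto
  have "-(pi/2) < ph m k (c0 - x)" by (rule ph_bounds)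
  moreover have "ph m k (c0 - x) \<le> 2 * fy - pi/2 - \<eta>" using h c0 unfolding fy_def Y_def by blast
  ultimately have fy0: "fy > 0" using eta by linarith
  have fy1: "fy < pi/2" unfolding fy_def by (rule ph_bounds)
  define s0 where "s0 = sin (min (pi/2 - fy + \<eta>) (pi/2))"
  have s0gt: "s0 > cos fy"
  proof (cases "pi/2 - fy + \<eta> \<le> pi/2")
    case True
    have "sin (pi/2 - fy) < sin (pi/2 - fy + \<eta>)"
      using True fy0 fy1 eta by (intro sin_monotone_2pi) auto
    then show ?thesis using True by (simp add: s0_def cos_sin_eq)
  next
    case False
    have "cos fy < cos 0" using fy0 fy1 by (intro cos_monotone_0_pi) auto
    then show ?thesis using False by (simp add: s0_def)
  qed
  have nY: "norm Y > 0" using Ym by (metis inner_zero_left zero_less_norm_iff order_less_irrefl)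
  have pol: "inner Y m = norm Y * cos fy" using polar[OF ok Ym] unfolding fy_def by simp
  have lb: "dist y c \<ge> norm Y * s0" if c: "c \<in> P" for c
  proof -
    define C where "C = c - x"
    have Cm: "inner C m > 0" using Ppos c unfolding C_def by auto
    have "ph m k C \<le> 2 * fy - pi/2 - \<eta>" using h c unfolding fy_def Y_def C_def by blast
    then have D: "fy - ph m k C \<ge> pi/2 - fy + \<eta>" by linarith
    have Dp: "fy - ph m k C > 0" using D fy1 eta by linarith
    have dl: "norm (Y - C) \<ge> norm Y * sin (min (fy - ph m k C) (pi/2))"
      using dist_lower[OF ok Ym Cm] Dp unfolding fy_def by simp
    have s1: "sin (min (fy - ph m k C) (pi/2)) \<ge> s0"
      unfolding s0_def using D fy1 fy0 eta pi_gt_zero by (intro sin_monotone_2pi_le) (auto simp: min_def)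
    have yc: "Y - C = y - c" unfolding Y_def C_def by simp
    have "norm (y - c) \<ge> norm Y * s0"
    proof -
      have "norm Y * s0 \<le> norm Y * sin (min (fy - ph m k C) (pi/2))"
        using nY s1 by (intro mult_left_mono) auto
      then show ?thesis using dl yc by simp
    qed
    then show ?thesis by (simp add: dist_norm)
  qed
  have "infdist y P \<ge> norm Y * s0"
    unfolding infdist_notempty[OF Pne] using Pne lb by (intro cINF_greatest) auto
  moreover have "norm Y * s0 > norm Y * cos fy" using nY s0gt by simp
  ultimately show False using pol ym yd unfolding Y_def by linarith
qed

lemma core2:
  assumes ok: "okb m k" and d: "d > 0"
    and Ppos: "\<forall>c\<in>P. inner (c - x) m > 0" and Pne: "P \<noteq> {}"
    and ym: "inner (y - x) m \<ge> d" and yd: "infdist y P \<le> d"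
    and eta: "\<eta> > 0"
    and h: "\<forall>c\<in>P. ph m k (c - x) \<ge> 2 * ph m k (y - x) + pi/2 + \<eta>"
  shows False
proof (rule core[OF okb_neg[OF ok] d Ppos Pne ym yd eta])
  show "\<forall>c\<in>P. ph m (- k) (c - x) \<le> 2 * ph m (- k) (y - x) - pi / 2 - \<eta>"
    using h by (auto simp: ph_neg)
qed


locale setup2 =
  fixes m k x :: "real^2" and P P' :: "(real^2) set" and d \<alpha> :: real
  assumes ok: "okb m k" and d: "d > 0"
    and Ppos: "\<forall>c\<in>P. inner (c - x) m > 0" and Pne: "P \<noteq> {}"
    and P'pos: "\<forall>y\<in>P'. inner (y - x) m \<ge> d"
    and P'd: "\<forall>y\<in>P'. infdist y P \<le> d"
    and hal: "\<forall>a\<in>P. \<forall>b\<in>P. ph m k (a - x) - ph m k (b - x) \<le> \<alpha>"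
begin

lemma yp: assumes "y \<in> P'" "p \<in> P"
  shows "ph m k (y - x) - ph m k (p - x) \<le> (\<alpha> + pi)/2"
proof (rule ccontr)
  assume a: "\<not> ?thesis"
  define \<eta> where "\<eta> = 2 * (ph m k (y - x) - ph m k (p - x)) - \<alpha> - pi"
  have e: "\<eta> > 0" using a unfolding \<eta>_def by (simp add: add_divide_distrib)
  have "-(pi/2) < ph m k (p - x)" by (rule ph_bounds)
  then have "\<forall>c\<in>P. ph m k (c - x) \<le> 2 * ph m k (y - x) - pi/2 - \<eta>"
    using hal assms(2) unfolding \<eta>_def by force
  then show False using core[OF ok d Ppos Pne _ _ e, of y] P'pos P'd assms by auto
qed

lemma py: assumes "y \<in> P'" "p \<in> P"
  shows "ph m k (p - x) - ph m k (y - x) \<le> (\<alpha> + pi)/2"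
proof (rule ccontr)
  assume a: "\<not> ?thesis"
  define \<eta> where "\<eta> = 2 * (ph m k (p - x) - ph m k (y - x)) - \<alpha> - pi"
  have e: "\<eta> > 0" using a unfolding \<eta>_def by (simp add: add_divide_distrib)
  have "ph m k (p - x) < pi/2" by (rule ph_bounds)
  then have "\<forall>c\<in>P. ph m k (c - x) \<ge> 2 * ph m k (y - x) + pi/2 + \<eta>"
    using hal assms(2) unfolding \<eta>_def by force
  then show False using core2[OF ok d Ppos Pne _ _ e, of y] P'pos P'd assms by auto
qed

lemma yy: assumes "y1 \<in> P'" "y2 \<in> P'"
  shows "ph m k (y1 - x) - ph m k (y2 - x) \<le> (\<alpha> + pi)/2"
proof (rule ccontr)
  assume a: "\<not> ?thesis"
  define g where "g = ph m k (y1 - x) - ph m k (y2 - x) - (\<alpha> + pi)/2"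
  have e: "g > 0" using a unfolding g_def by (simp add: add_divide_distrib)
  show False
  proof (cases "\<forall>c\<in>P. ph m k (c - x) \<le> 2 * ph m k (y1 - x) - pi/2 - g")
    case True
    then show False using core[OF ok d Ppos Pne _ _ e, of y1] P'pos P'd assms by auto
  next
    case False
    then obtain c0 where c0: "c0 \<in> P" "ph m k (c0 - x) > 2 * ph m k (y1 - x) - pi/2 - g" by force
    have "\<forall>c\<in>P. ph m k (c - x) \<ge> 2 * ph m k (y2 - x) + pi/2 + g"
    proof
      fix c assume "c \<in> P"
      then have "ph m k (c0 - x) - ph m k (c - x) \<le> \<alpha>" using hal c0 by auto
      then show "ph m k (c - x) \<ge> 2 * ph m k (y2 - x) + pi/2 + g" using c0 unfolding g_def by (simp add: add_divide_distrib)
    qed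
    then show False using core2[OF ok d Ppos Pne _ _ e, of y2] P'pos P'd assms by auto
  qed
qed

end


context setup2 begin

lemma Qrep:
  assumes cP: "convex P" and cP': "convex P'" and P'ne: "P' \<noteq> {}"
    and a: "a \<in> convex hull (P \<union> P')"
  shows "\<exists>s\<in>P. \<exists>t\<in>P'. inner (a - x) m > 0 \<and>
     min (ph m k (s - x)) (ph m k (t - x)) \<le> ph m k (a - x) \<and>
     ph m k (a - x) \<le> max (ph m k (s - x)) (ph m k (t - x))"
proof -
  obtain u v s t where h: "a = u *\<^sub>R s + v *\<^sub>R t" "u \<ge> 0" "v \<ge> 0" "u + v = 1" "s \<in> P" "t \<in> P'"
    using a convex_hull_union_two[OF cP Pne cP' P'ne] by auto
  have ax: "a - x = u *\<^sub>R (s - x) + v *\<^sub>R (t - x)"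
    using h(1,4) by (simp add: algebra_simps flip: scaleR_add_left)
  have sm: "inner (s - x) m > 0" using Ppos h(5) by auto
  have tm: "inner (t - x) m > 0" using P'pos h(6) d by force
  have "inner (a - x) m = u * inner (s - x) m + v * inner (t - x) m"
    unfolding ax by (simp add: inner_add_left)
  moreover have "u * inner (s - x) m + v * inner (t - x) m > 0"
  proof (cases "u > 0")
    case True
    then have "u * inner (s - x) m > 0" using sm by simp
    moreover have "v * inner (t - x) m \<ge> 0" using h tm by simp
    ultimately show ?thesis by linarith
  next
    case False
    then have "v > 0" using h by auto
    then show ?thesis using h tm False by simp
  qed
  ultimately have "inner (a - x) m > 0" by simp
  moreover have "min (ph m k (s - x)) (ph m k (t - x)) \<le> ph m k (a - x) \<and>
     ph m k (a - x) \<le> max (ph m k (s - x)) (ph m k (t - x))"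
    unfolding ax using mediant[OF sm tm h(2,3)] h(4) by simp
  ultimately show ?thesis using h by blast
qed

lemma Qbound:
  assumes cP: "convex P" and cP': "convex P'" and P'ne: "P' \<noteq> {}" and api: "\<alpha> \<le> pi"
    and a: "a \<in> convex hull (P \<union> P')" and b: "b \<in> convex hull (P \<union> P')"
  shows "ph m k (a - x) - ph m k (b - x) \<le> (\<alpha> + pi)/2"
proof -
  obtain s1 t1 where 1: "s1 \<in> P" "t1 \<in> P'" "ph m k (a - x) \<le> max (ph m k (s1 - x)) (ph m k (t1 - x))"
    using Qrep[OF cP cP' P'ne a] by blast
  obtain s2 t2 where 2: "s2 \<in> P" "t2 \<in> P'" "min (ph m k (s2 - x)) (ph m k (t2 - x)) \<le> ph m k (b - x)"
    using Qrep[OF cP cP' P'ne b] by blast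
  have pp: "ph m k (s1 - x) - ph m k (s2 - x) \<le> (\<alpha> + pi)/2"
  proof -
    have "ph m k (s1 - x) - ph m k (s2 - x) \<le> \<alpha>" using hal 1 2 by auto
    then show ?thesis using api by (simp add: add_divide_distrib)
  qed
  have t: "ph m k (s1 - x) - ph m k (t2 - x) \<le> (\<alpha> + pi)/2"
          "ph m k (t1 - x) - ph m k (s2 - x) \<le> (\<alpha> + pi)/2"
          "ph m k (t1 - x) - ph m k (t2 - x) \<le> (\<alpha> + pi)/2"
    using py[of t2 s1] yp[of t1 s2] yy[of t1 t2] 1 2 by auto
  show ?thesis using pp t 1(3) 2(3) by (auto simp: max_def min_def split: if_splits)
qed

end


lemma abs_div_le1: assumes "\<bar>a\<bar> \<le> (b::real)" shows "\<bar>a / b\<bar> \<le> 1"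
proof (cases "b = 0")
  case True then show ?thesis by simp
next
  case False
  have "b \<ge> 0" using assms abs_ge_zero[of a] by linarith
  then have "b > 0" using False by linarith
  then show ?thesis using assms by (simp add: abs_divide)
qed

lemma vec_angle_le_pi: "vec_angle u v \<le> pi"
proof -
  have h: "\<bar>inner u v / (norm u * norm v)\<bar> \<le> 1"
    by (rule abs_div_le1) (rule Cauchy_Schwarz_ineq2)
  have "inner u v / (norm u * norm v) \<le> 1" by (rule abs_le_D1[OF h])
  moreover have "- (inner u v / (norm u * norm v)) \<le> 1" by (rule abs_le_D2[OF h])
  ultimately show ?thesis unfolding vec_angle_def by (intro arccos_ubound) linarith+
qed

lemma poly_facts:
  assumes "open_convex_polygon P"
  shows "\<exists>V. finite V \<and> closure P = convex hull V \<and> P = interior (convex hull V)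
     \<and> open P \<and> convex P \<and> bounded P \<and> P \<noteq> {}"
proof -
  obtain V where V: "finite V" "P = interior (convex hull V)" "P \<noteq> {}"
    using assms unfolding open_convex_polygon_def by auto
  have cpt: "compact (convex hull V)" using V(1) by (simp add: compact_convex_hull finite_imp_compact)
  have "closure P = convex hull V"
    using V convex_closure_interior[of "convex hull V"] cpt
    by (simp add: compact_imp_closed closure_closed)
  moreover have "bounded P"
  proof -
    have "P \<subseteq> convex hull V" using V(2) interior_subset by blast
    then show ?thesis using bounded_subset[OF compact_imp_bounded[OF cpt]] by blast
  qed
  ultimately show ?thesis using V by (auto intro: convex_interior)
qed


lemma ext_lemma:
  assumes "x \<in> S" "c > 0" "\<forall>z\<in>S. inner (z - x) w \<ge> c * norm (z - x)"
  shows "x extreme_point_of S"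
  unfolding extreme_point_of_def
proof (intro conjI ballI assms(1))
  fix a b assume ab: "a \<in> S" "b \<in> S"
  show "x \<notin> open_segment a b"
  proof
    assume "x \<in> open_segment a b"
    then obtain u where u: "a \<noteq> b" "u > 0" "u < 1" "x = (1 - u) *\<^sub>R a + u *\<^sub>R b"
      by (auto simp: in_segment)
    have "(1 - u) *\<^sub>R (a - x) + u *\<^sub>R (b - x) = ((1 - u) *\<^sub>R a + u *\<^sub>R b) - ((1 - u) + u) *\<^sub>R x"
      by (simp only: scaleR_diff_right scaleR_left_distrib) (simp add: algebra_simps)
    also have "\<dots> = 0" using u(4) by simp
    finally have "inner ((1 - u) *\<^sub>R (a - x) + u *\<^sub>R (b - x)) w = 0" by simp
    then have e: "(1 - u) * inner (a - x) w + u * inner (b - x) w = 0"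
      by (simp add: inner_add_left)
    have ia: "inner (a - x) w \<ge> c * norm (a - x)" "inner (b - x) w \<ge> c * norm (b - x)"
      using assms(3) ab by auto
    have "c * norm (a - x) \<ge> 0" "c * norm (b - x) \<ge> 0" using assms(2) by auto
    then have "(1 - u) * inner (a - x) w \<ge> 0" "u * inner (b - x) w \<ge> 0" using ia u(2,3) by auto
    then have "(1 - u) * inner (a - x) w = 0" "u * inner (b - x) w = 0" using e by linarith+
    then have "inner (a - x) w = 0" "inner (b - x) w = 0" using u(2,3) by auto
    then have "c * norm (a - x) \<le> 0" "c * norm (b - x) \<le> 0" using ia by auto
    then have "a = x" "b = x" using assms(2) by (auto simp: mult_le_0_iff)
    then show False using u(1) by simp
  qed
qed


lemma angle_bound:
  assumes w: "norm w = 1" and c: "0 < c" "c \<le> 1/2"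
    and h: "\<forall>z\<in>S. inner (z - x) w \<ge> c * norm (z - x)" and A: "a \<in> S" and B: "b \<in> S"
  shows "vec_angle (a - x) (b - x) \<le> arccos (2 * c^2 - 1)"
proof -
  define A where "A = a - x"
  define B where "B = b - x"
  have hA: "inner A w \<ge> c * norm A" "inner B w \<ge> c * norm B" using h assms unfolding A_def B_def by auto
  have c2: "2 * c^2 - 1 \<le> -1/2" "-1 \<le> 2 * c^2 - 1"
  proof -
    have "c^2 \<le> (1/2)^2" using c by (intro power_mono) auto
    then show "2 * c^2 - 1 \<le> -1/2" by (simp add: power2_eq_square)
  qed simp
  show ?thesis
  proof (cases "A = 0 \<or> B = 0")
    case True
    then have "vec_angle A B = arccos 0" unfolding vec_angle_def by auto
    also have "\<dots> \<le> arccos (2 * c^2 - 1)" using c2 by (intro arccos_le_arccos) auto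
    finally show ?thesis unfolding A_def B_def .
  next
    case False
    then have nA: "norm A > 0" and nB: "norm B > 0" by auto
    define a' where "a' = A /\<^sub>R norm A"
    define b' where "b' = B /\<^sub>R norm B"
    have na: "norm a' = 1" "norm b' = 1" using nA nB by (auto simp: a'_def b'_def)
    have ia: "inner a' w \<ge> c" "inner b' w \<ge> c"
    proof -
      have "inner a' w = inner A w / norm A" "inner b' w = inner B w / norm B"
        by (simp_all add: a'_def b'_def divide_inverse mult.commute)
      then show "inner a' w \<ge> c" "inner b' w \<ge> c"
        using hA nA nB by (simp_all add: pos_le_divide_eq)
    qed
    have "inner (a' + b') w \<le> norm (a' + b')"
      using Cauchy_Schwarz_ineq2[of "a' + b'" w] w by simp
    then have "2 * c \<le> norm (a' + b')" using ia by (simp add: inner_add_left)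
    then have "(2 * c)^2 \<le> norm (a' + b')^2" using c by (intro power_mono) auto
    also have "norm (a' + b')^2 = 2 + 2 * inner a' b'"
      using na by (simp add: power2_norm_eq_inner inner_add_left inner_add_right inner_commute)
        (simp add: power2_norm_eq_inner[symmetric])
    finally have ab: "inner a' b' \<ge> 2 * c^2 - 1" by (simp add: power_mult_distrib)
    have iab: "inner a' b' = inner A B / (norm A * norm B)"
      by (simp add: a'_def b'_def divide_inverse mult.commute mult.left_commute)
    have "inner a' b' \<le> 1" using Cauchy_Schwarz_ineq2[of a' b'] na by simp
    then have "arccos (inner a' b') \<le> arccos (2 * c^2 - 1)"
      using ab c2 by (intro arccos_le_arccos) auto
    then show ?thesis unfolding vec_angle_def A_def[symmetric] B_def[symmetric] iab .
  qed
qed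


lemma arccos_lt_pi: "-1 < y \<Longrightarrow> y \<le> 1 \<Longrightarrow> arccos y < pi"
  by (cases "y < 1") (auto simp: arccos_lt_bounded)




lemma bdd_infdist:
  fixes A B :: "'a::real_normed_vector set"
  assumes "bounded A" "B \<noteq> {}"
  shows "bdd_above ((\<lambda>z. infdist z B) ` A)"
proof -
  obtain y0 where y0: "y0 \<in> B" using assms(2) by auto
  obtain K where K: "\<forall>z\<in>A. norm z \<le> K" using assms(1) bounded_iff by blast
  show ?thesis
  proof (rule bdd_aboveI2)
    fix z assume "z \<in> A"
    have "infdist z B \<le> dist z y0" by (rule infdist_le[OF y0])
    also have "\<dots> \<le> norm z + norm y0" by (rule norm_triangle_ineq4[unfolded dist_norm[symmetric]])
    also have "\<dots> \<le> K + norm y0" using K \<open>z \<in> A\<close> by auto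
    finally show "infdist z B \<le> K + norm y0" .
  qed
qed

lemma vertex_cone:
  assumes "open_convex_polygon P" "polygon_vertex x P"
  shows "\<exists>w c. norm w = 1 \<and> 0 < c \<and> c \<le> 1/2 \<and> (\<forall>z\<in>closure P. c * norm (z - x) \<le> inner (z - x) w)"
proof -
  obtain V where V: "finite V" "closure P = convex hull V" "P = interior (convex hull V)" "P \<noteq> {}"
    using poly_facts[OF assms(1)] by blast
  have ex: "x extreme_point_of (convex hull V)" using assms(2) V(2) unfolding polygon_vertex_def by simp
  have xV: "x \<in> V" by (rule extreme_point_of_convex_hull[OF ex])
  define S where "S = convex hull (V - {x})"
  have "convex (convex hull V - {x})" using ex extreme_point_of_stillconvex[of "convex hull V" x] by simp
  moreover have "V - {x} \<subseteq> convex hull V - {x}" using hull_subset[of V convex] by blast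
  ultimately have "S \<subseteq> convex hull V - {x}" unfolding S_def by (rule hull_minimal[rotated])
  then have xS: "x \<notin> S" by blast
  have Vne: "V - {x} \<noteq> {}"
  proof
    assume "V - {x} = {}"
    then have "V = {x}" using xV by blast
    then have "P = {}" using V(3) by simp
    then show False using V(4) by simp
  qed
  have Scpt: "compact S" unfolding S_def using V(1) by (simp add: compact_convex_hull finite_imp_compact)
  obtain a b where ab: "inner a x < b" "\<forall>s\<in>S. inner a s > b"
    using separating_hyperplane_closed_point[of S x] xS Scpt unfolding S_def
    by (auto simp: compact_imp_closed)
  obtain B where B: "B > 0" "\<forall>s\<in>S. norm s \<le> B" using compact_imp_bounded[OF Scpt] bounded_pos by blast
  define R where "R = B + norm x"
  have R: "R > 0" using B unfolding R_def by (simp add: add_pos_nonneg)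
  have Rs: "norm (s - x) \<le> R" if "s \<in> S" for s
    using norm_triangle_ineq4[of s x] B that unfolding R_def by force
  define \<delta> where "\<delta> = b - inner a x"
  have \<delta>: "\<delta> > 0" using ab unfolding \<delta>_def by simp
  have Sne: "S \<noteq> {}" using Vne unfolding S_def by simp
  have a0: "a \<noteq> 0" using ab Sne by auto
  have key: "(\<delta> / R) * norm (z - x) \<le> inner (z - x) a" if z: "z \<in> closure P" for z
  proof -
    have "z \<in> convex hull (insert x (V - {x}))" using z V(2) xV by (simp add: insert_absorb)
    then obtain u v s where h: "u \<ge> 0" "v \<ge> 0" "u + v = 1" "s \<in> S" "z = u *\<^sub>R x + v *\<^sub>R s"
      using convex_hull_insert[OF Vne, of x] unfolding S_def by auto
    have zx: "z - x = v *\<^sub>R (s - x)"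
    proof -
      have "u *\<^sub>R x + v *\<^sub>R x = x" using h(3) by (metis scaleR_left_distrib scaleR_one)
      then show ?thesis using h(5) by (simp add: algebra_simps)
    qed
    have i: "inner (z - x) a = v * (inner a s - inner a x)"
      unfolding zx by (simp add: inner_diff_left inner_diff_right inner_commute)
    have "inner a s - inner a x \<ge> \<delta>" using ab h(4) unfolding \<delta>_def by auto
    then have i2: "inner (z - x) a \<ge> v * \<delta>" unfolding i using h(2) by (intro mult_left_mono) auto
    have n: "norm (z - x) = v * norm (s - x)" unfolding zx using h(2) by simp
    have "norm (z - x) \<le> v * R" unfolding n using Rs[OF h(4)] h(2) by (intro mult_left_mono)
    then have "(\<delta> / R) * norm (z - x) \<le> (\<delta> / R) * (v * R)" using \<delta> R by (intro mult_left_mono) auto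
    also have "\<dots> = v * \<delta>" using R by simp
    finally show ?thesis using i2 by linarith
  qed
  define w where "w = a /\<^sub>R norm a"
  define c where "c = min (\<delta> / R / norm a) (1/2)"
  have na: "norm a > 0" using a0 by simp
  have "norm w = 1" unfolding w_def using a0 by simp
  moreover have "0 < c" unfolding c_def using \<delta> R na by auto
  moreover have "c \<le> 1/2" unfolding c_def by (rule min.cobounded2)
  moreover have "\<forall>z\<in>closure P. c * norm (z - x) \<le> inner (z - x) w"
  proof
    fix z assume z: "z \<in> closure P"
    have "c * norm (z - x) \<le> (\<delta> / R / norm a) * norm (z - x)" unfolding c_def by (intro mult_right_mono) auto
    also have "\<dots> = ((\<delta> / R) * norm (z - x)) / norm a" by simp
    also have "\<dots> \<le> inner (z - x) a / norm a" using key[OF z] na by (intro divide_right_mono) auto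
    also have "\<dots> = inner (z - x) w" unfolding w_def by (simp add: divide_inverse mult.commute)
    finally show "c * norm (z - x) \<le> inner (z - x) w" .
  qed
  ultimately show ?thesis by blast
qed


lemma angle_bdd: "bdd_above ((\<lambda>p. vec_angle (fst p - x) (snd p - x)) ` S)"
  by (rule bdd_aboveI2[where M=pi]) (rule vec_angle_le_pi)

lemma alpha_bounds:
  assumes "open_convex_polygon P" "polygon_vertex x P"
  shows "polygon_angle P x < pi" "\<forall>a\<in>P. \<forall>b\<in>P. vec_angle (a - x) (b - x) \<le> polygon_angle P x"
proof -
  obtain w c where wc: "norm w = 1" "0 < c" "c \<le> 1/2"
    "\<forall>z\<in>closure P. c * norm (z - x) \<le> inner (z - x) w"
    using vertex_cone[OF assms] by blast
  have Pne: "P \<noteq> {}" using poly_facts[OF assms(1)] by blast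
  have "polygon_angle P x \<le> arccos (2 * c^2 - 1)"
    unfolding polygon_angle_def
  proof (rule cSUP_least)
    show "P \<times> P \<noteq> {}" using Pne by simp
    fix p assume p: "p \<in> P \<times> P"
    then have "fst p \<in> closure P" "snd p \<in> closure P" using closure_subset[of P] by auto
    then show "vec_angle (fst p - x) (snd p - x) \<le> arccos (2 * c^2 - 1)"
      by (intro angle_bound[OF wc(1-3), of "closure P"]) (use wc(4) in auto)
  qed
  also have "\<dots> < pi"
  proof (rule arccos_lt_pi)
    have "c^2 > 0" using wc(2) by simp
    then show "-1 < 2 * c^2 - 1" by simp
    have "c^2 \<le> (1/2)^2" using wc by (intro power_mono) auto
    then show "2 * c^2 - 1 \<le> 1" by (simp add: power2_eq_square)
  qed
  finally show "polygon_angle P x < pi" .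
  show "\<forall>a\<in>P. \<forall>b\<in>P. vec_angle (a - x) (b - x) \<le> polygon_angle P x"
  proof (intro ballI)
    fix a b assume "a \<in> P" "b \<in> P"
    then have "(a, b) \<in> P \<times> P" by simp
    from cSUP_upper[OF this angle_bdd]
    show "vec_angle (a - x) (b - x) \<le> polygon_angle P x" unfolding polygon_angle_def by simp
  qed
qed

lemma m_exists:
  assumes P: "open_convex_polygon P" and P': "open_convex_polygon P'"
    and dd: "d = infdist x P'" and d: "d > 0"
    and hP: "\<forall>z\<in>P. infdist z P' \<le> d"
  shows "\<exists>m. norm m = 1 \<and> (\<forall>y\<in>P'. d \<le> inner (y - x) m) \<and> (\<forall>z\<in>P. inner (z - x) m > 0)"
proof -
  obtain V where V: "open P" "P \<noteq> {}" using poly_facts[OF P] by blast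
  obtain V' where V': "convex P'" "P' \<noteq> {}" using poly_facts[OF P'] by blast
  define K where "K = closure P'"
  have K: "convex K" "closed K" "K \<noteq> {}" unfolding K_def using V' by (auto simp: convex_closure)
  define p where "p = closest_point K x"
  have pK: "p \<in> K" unfolding p_def by (rule closest_point_in_set[OF K(2,3)])
  have pmin: "\<forall>z\<in>K. dist x p \<le> dist x z" unfolding p_def using closest_point_exists[OF K(2,3)] by blast
  define \<delta> where "\<delta> = dist x p"
  have "infdist p P' = 0" using pK V'(2) in_closure_iff_infdist_zero[of P' p] unfolding K_def by simp
  then have d\<delta>: "d \<le> \<delta>" using infdist_triangle[of x P' p] unfolding dd \<delta>_def by simp
  then have \<delta>0: "\<delta> > 0" using d by simp
  define m where "m = (p - x) /\<^sub>R \<delta>"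
  have nm: "norm m = 1" unfolding m_def using \<delta>0 by (simp add: \<delta>_def dist_norm norm_minus_commute)
  have ym: "d \<le> inner (y - x) m" if y: "y \<in> P'" for y
  proof -
    have yK: "y \<in> K" using y closure_subset unfolding K_def by blast
    have "inner (x - p) (y - p) \<le> 0" by (rule any_closest_point_dot[OF K(1,2) pK yK pmin])
    moreover have "inner (y - x) (p - x) = inner (y - p) (p - x) + inner (p - x) (p - x)"
      by (simp add: inner_diff_left inner_diff_right)
    moreover have "inner (p - x) (p - x) = \<delta>^2"
      unfolding \<delta>_def by (simp add: dist_norm norm_minus_commute power2_norm_eq_inner)
    moreover have "inner (y - p) (p - x) = - inner (x - p) (y - p)"
      by (simp add: inner_diff_left inner_diff_right inner_commute)
    ultimately have "inner (y - x) (p - x) \<ge> \<delta>^2" by linarith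
    then have "inner (y - x) (p - x) / \<delta> \<ge> \<delta>" using \<delta>0 by (simp add: pos_le_divide_eq power2_eq_square)
    moreover have "inner (y - x) m = inner (y - x) (p - x) / \<delta>" unfolding m_def by (simp add: divide_inverse mult.commute)
    ultimately have "inner (y - x) m \<ge> \<delta>" by simp
    then show ?thesis using d\<delta> by linarith
  qed
  have zm0: "inner (z - x) m \<ge> 0" if z: "z \<in> P" for z
  proof (rule ccontr)
    assume "\<not> ?thesis"
    then have e: "inner (z - x) m < 0" by simp
    have "infdist z P' \<ge> d - inner (z - x) m"
      unfolding infdist_notempty[OF V'(2)]
    proof (rule cINF_greatest[OF V'(2)])
      fix y assume y: "y \<in> P'"
      have "inner (y - z) m \<le> norm (y - z)" using Cauchy_Schwarz_ineq2[of "y - z" m] nm by simp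
      moreover have "inner (y - z) m = inner (y - x) m - inner (z - x) m" by (simp add: inner_diff_left)
      ultimately show "d - inner (z - x) m \<le> dist z y" using ym[OF y] by (simp add: dist_norm norm_minus_commute)
    qed
    then show False using hP z e by fastforce
  qed
  have "inner (z - x) m > 0" if z: "z \<in> P" for z
  proof -
    obtain r where r: "r > 0" "ball z r \<subseteq> P" using V(1) z open_contains_ball by blast
    have "z - (r/2) *\<^sub>R m \<in> ball z r" using r nm by (simp add: dist_norm)
    then have "inner (z - (r/2) *\<^sub>R m - x) m \<ge> 0" using zm0 r by blast
    moreover have "inner (z - (r/2) *\<^sub>R m - x) m = inner (z - x) m - r/2"
      using nm by (simp add: inner_diff_left power2_norm_eq_inner[symmetric])
    ultimately show ?thesis using r by linarith
  qed
  then show ?thesis using nm ym by blast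
qed


context setup2 begin

lemma Qangle:
  assumes cP: "convex P" and cP': "convex P'" and P'ne: "P' \<noteq> {}" and api: "\<alpha> \<le> pi"
    and a: "a \<in> convex hull (P \<union> P')" and b: "b \<in> convex hull (P \<union> P')"
  shows "vec_angle (a - x) (b - x) \<le> (\<alpha> + pi)/2"
proof -
  have am: "inner (a - x) m > 0" using Qrep[OF cP cP' P'ne a] by blast
  have bm: "inner (b - x) m > 0" using Qrep[OF cP cP' P'ne b] by blast
  have "vec_angle (a - x) (b - x) = \<bar>ph m k (a - x) - ph m k (b - x)\<bar>" by (rule vangle_ph[OF ok am bm])
  moreover have "ph m k (a - x) - ph m k (b - x) \<le> (\<alpha> + pi)/2" by (rule Qbound[OF cP cP' P'ne api a b])
  moreover have "ph m k (b - x) - ph m k (a - x) \<le> (\<alpha> + pi)/2" by (rule Qbound[OF cP cP' P'ne api b a])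
  ultimately show ?thesis by linarith
qed

lemma Qvertex:
  assumes cP: "convex P" and cP': "convex P'" and P'ne: "P' \<noteq> {}" and alt: "\<alpha> < pi"
    and xQ: "x \<in> closure (convex hull (P \<union> P'))"
  shows "x extreme_point_of closure (convex hull (P \<union> P'))"
proof -
  define Q where "Q = convex hull (P \<union> P')"
  define f where "f a = ph m k (a - x)" for a
  define B where "B = (\<alpha> + pi)/2"
  have Qne: "Q \<noteq> {}" unfolding Q_def using Pne hull_subset[of "P \<union> P'" convex] by blast
  have bddU: "bdd_above (f ` Q)" proof (rule bdd_aboveI2[where M="pi/2"])
    fix a show "f a \<le> pi/2" unfolding f_def using ph_bounds(2)[of m k "a - x"] by linarith
  qed
  have bddL: "bdd_below (f ` Q)" proof (rule bdd_belowI2[where m="-(pi/2)"])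
    fix a show "-(pi/2) \<le> f a" unfolding f_def using ph_bounds(1)[of m k "a - x"] by linarith
  qed
  define U where "U = (SUP a\<in>Q. f a)"
  define L where "L = (INF a\<in>Q. f a)"
  have fU: "f a \<le> U" if "a \<in> Q" for a unfolding U_def using that bddU by (rule cSUP_upper)
  have fL: "L \<le> f a" if "a \<in> Q" for a unfolding L_def by (rule cINF_lower[OF bddL that])
  have UB: "U - B \<le> f b" if b: "b \<in> Q" for b
  proof -
    have "U \<le> f b + B" unfolding U_def
    proof (rule cSUP_least[OF Qne])
      fix a assume "a \<in> Q"
      then have "ph m k (a - x) - ph m k (b - x) \<le> (\<alpha> + pi)/2"
        using Qbound[OF cP cP' P'ne _ _ b[unfolded Q_def], of a] alt unfolding Q_def by simp
      then show "f a \<le> f b + B" unfolding f_def B_def by linarith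
    qed
    then show ?thesis by linarith
  qed
  have ULB: "U - B \<le> L" unfolding L_def by (rule cINF_greatest[OF Qne]) (rule UB)
  define \<beta> where "\<beta> = (L + U)/2"
  define \<gamma> where "\<gamma> = B/2"
  have dev: "\<bar>f a - \<beta>\<bar> \<le> \<gamma>" if "a \<in> Q" for a
  proof -
    have "f a - \<beta> \<le> \<gamma>" "\<beta> - f a \<le> \<gamma>"
      using fU[OF that] fL[OF that] ULB unfolding \<beta>_def \<gamma>_def by (simp_all add: field_simps)
    then show ?thesis by (simp add: abs_le_iff)
  qed
  have \<gamma>pi: "\<gamma> < pi/2" using alt unfolding \<gamma>_def B_def by simp
  have \<gamma>0: "\<gamma> \<ge> 0" using dev[of "SOME a. a \<in> Q"] Qne by (metis abs_ge_zero order_trans some_in_eq)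
  have cg: "cos \<gamma> > 0" using \<gamma>pi \<gamma>0 by (intro cos_gt_zero_pi) auto
  define w where "w = cos \<beta> *\<^sub>R m + sin \<beta> *\<^sub>R k"
  have ineq: "cos \<gamma> * norm (a - x) \<le> inner (a - x) w" if a: "a \<in> Q" for a
  proof -
    have am: "inner (a - x) m > 0" using Qrep[OF cP cP' P'ne a[unfolded Q_def]] by blast
    have "inner (a - x) w = cos \<beta> * inner (a - x) m + sin \<beta> * inner (a - x) k"
      unfolding w_def by (simp add: inner_add_right)
    also have "\<dots> = norm (a - x) * (cos (f a) * cos \<beta> + sin (f a) * sin \<beta>)"
      using polar[OF ok am] unfolding f_def by (simp add: algebra_simps)
    also have "\<dots> = norm (a - x) * cos (f a - \<beta>)" by (simp add: cos_diff)
    finally have e: "inner (a - x) w = norm (a - x) * cos (f a - \<beta>)" .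
    have "cos \<gamma> \<le> cos \<bar>f a - \<beta>\<bar>" using dev[OF a] \<gamma>pi by (intro cos_monotone_0_pi_le) auto
    then have "cos \<gamma> \<le> cos (f a - \<beta>)" by simp
    then have "norm (a - x) * cos \<gamma> \<le> norm (a - x) * cos (f a - \<beta>)" by (intro mult_left_mono) auto
    then show ?thesis using e by (simp add: mult.commute)
  qed
  have cl: "closed {z. cos \<gamma> * norm (z - x) \<le> inner (z - x) w}"
    by (intro closed_Collect_le continuous_intros)
  have "closure Q \<subseteq> {z. cos \<gamma> * norm (z - x) \<le> inner (z - x) w}"
    by (rule closure_minimal) (use ineq cl in auto)
  then show ?thesis using ext_lemma[OF xQ cg, of w] unfolding Q_def by blast
qed

end


theorem mainTheorem18:
  fixes P P' :: "(real^2) set" and x\<^sub>c :: "real^2"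
  assumes "open_convex_polygon P" and "open_convex_polygon P'"
    and "polygon_vertex x\<^sub>c P"
    and "infdist x\<^sub>c P' = hausdorff_dist P P'"
  defines "Q \<equiv> convex hull (P \<union> P')"
  shows "polygon_vertex x\<^sub>c Q
         \<and> polygon_angle Q x\<^sub>c \<le> (polygon_angle P x\<^sub>c + pi) / 2
         \<and> (polygon_angle P x\<^sub>c + pi) / 2 < pi"
proof -
  obtain V where PV: "finite V" "closure P = convex hull V" "P = interior (convex hull V)"
     "open P" "convex P" "bounded P" "P \<noteq> {}"
    using poly_facts[OF assms(1)] by blast
  obtain V' where PV': "finite V'" "closure P' = convex hull V'" "P' = interior (convex hull V')"
     "open P'" "convex P'" "bounded P'" "P' \<noteq> {}"
    using poly_facts[OF assms(2)] by blast
  define \<alpha> where "\<alpha> = polygon_angle P x\<^sub>c"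
  have alt: "\<alpha> < pi" unfolding \<alpha>_def by (rule alpha_bounds(1)[OF assms(1,3)])
  have hal0: "\<forall>a\<in>P. \<forall>b\<in>P. vec_angle (a - x\<^sub>c) (b - x\<^sub>c) \<le> \<alpha>"
    unfolding \<alpha>_def by (rule alpha_bounds(2)[OF assms(1,3)])
  define d where "d = infdist x\<^sub>c P'"
  have hdd: "hausdorff_dist P P' = d" using assms(4) unfolding d_def by simp
  have hP: "\<forall>z\<in>P. infdist z P' \<le> d"
  proof
    fix z assume z: "z \<in> P"
    have "infdist z P' \<le> (SUP x\<in>P. infdist x P')" by (rule cSUP_upper[OF z bdd_infdist[OF PV(6) PV'(7)]])
    also have "\<dots> \<le> hausdorff_dist P P'" unfolding hausdorff_dist_def by simp
    finally show "infdist z P' \<le> d" using hdd by simp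
  qed
  have hP': "\<forall>y\<in>P'. infdist y P \<le> d"
  proof
    fix y assume y: "y \<in> P'"
    have "infdist y P \<le> (SUP x\<in>P'. infdist x P)" by (rule cSUP_upper[OF y bdd_infdist[OF PV'(6) PV(7)]])
    also have "\<dots> \<le> hausdorff_dist P P'" unfolding hausdorff_dist_def by simp
    finally show "infdist y P \<le> d" using hdd by simp
  qed
  have third: "(\<alpha> + pi) / 2 < pi" using alt by simp
  have xcl: "x\<^sub>c \<in> closure P" using assms(3) unfolding polygon_vertex_def extreme_point_of_def by blast
  have PQ: "P \<subseteq> Q" "P' \<subseteq> Q" unfolding Q_def using hull_subset[of "P \<union> P'" convex] by auto
  show ?thesis
  proof (cases "d = 0")
    case True
    have "P \<subseteq> closure P'"
    proof
      fix z assume "z \<in> P"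
      then have "infdist z P' = 0" using hP True infdist_nonneg[of z P'] by force
      then show "z \<in> closure P'" using in_closure_iff_infdist_zero[OF PV'(7)] by simp
    qed
    then have c1: "closure P \<subseteq> closure P'" by (rule closure_minimal) simp
    have "P' \<subseteq> closure P"
    proof
      fix z assume "z \<in> P'"
      then have "infdist z P = 0" using hP' True infdist_nonneg[of z P] by force
      then show "z \<in> closure P" using in_closure_iff_infdist_zero[OF PV(7)] by simp
    qed
    then have c2: "closure P' \<subseteq> closure P" by (rule closure_minimal) simp
    have "P = interior (closure P)" using convex_interior_closure[OF PV(5)] PV(4) interior_open by metis
    moreover have "P' = interior (closure P')" using convex_interior_closure[OF PV'(5)] PV'(4) interior_open by metis
    ultimately have PP: "P' = P" using c1 c2 by simp
    have QP: "Q = P" unfolding Q_def PP using PV(5) by (simp add: convex_hull_eq)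
    show ?thesis using assms(3) third alt unfolding QP \<alpha>_def[symmetric] by simp
  next
    case False
    then have d: "d > 0" using infdist_nonneg[of x\<^sub>c P'] unfolding d_def by simp
    obtain m where m: "norm m = 1" "\<forall>y\<in>P'. d \<le> inner (y - x\<^sub>c) m" "\<forall>z\<in>P. inner (z - x\<^sub>c) m > 0"
      using m_exists[OF assms(1,2) d_def d hP] by blast
    have ok: "okb m (rot m)" using m(1) by (simp add: okb_def)
    have hal: "\<forall>a\<in>P. \<forall>b\<in>P. ph m (rot m) (a - x\<^sub>c) - ph m (rot m) (b - x\<^sub>c) \<le> \<alpha>"
    proof (intro ballI)
      fix a b assume a: "a \<in> P" and b: "b \<in> P"
      have "vec_angle (a - x\<^sub>c) (b - x\<^sub>c) = \<bar>ph m (rot m) (a - x\<^sub>c) - ph m (rot m) (b - x\<^sub>c)\<bar>"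
        using vangle_ph[OF ok] m(3) a b by blast
      then show "ph m (rot m) (a - x\<^sub>c) - ph m (rot m) (b - x\<^sub>c) \<le> \<alpha>" using hal0 a b by force
    qed
    interpret S: setup2 m "rot m" x\<^sub>c P P' d \<alpha>
      using ok d m(2,3) PV(7) hP' hal by unfold_locales auto
    have ang: "polygon_angle Q x\<^sub>c \<le> (\<alpha> + pi)/2"
      unfolding polygon_angle_def
    proof (rule cSUP_least)
      show "Q \<times> Q \<noteq> {}" using PQ PV(7) by auto
      fix p assume "p \<in> Q \<times> Q"
      then show "vec_angle (fst p - x\<^sub>c) (snd p - x\<^sub>c) \<le> (\<alpha> + pi) / 2"
        using S.Qangle[OF PV(5) PV'(5) PV'(7)] alt unfolding Q_def by auto
    qed
    have "x\<^sub>c \<in> closure Q" using xcl closure_mono[OF PQ(1)] by blast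
    then have "x\<^sub>c extreme_point_of closure Q"
      using S.Qvertex[OF PV(5) PV'(5) PV'(7) alt] unfolding Q_def by blast
    then show ?thesis using ang third unfolding polygon_vertex_def \<alpha>_def by simp
  qed
qed


end
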